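(* The max-min fairness mechanism (MMF) is efficient, fair, and strategy-proof. That is, for every $n\ge 1$, every vector of entitlements $e_1,\dots,e_n>0$ with $\sum_i e_i=1$, and for agents whose utilities are as described in the context: (i) (efficiency) for every vector of true demands $d^*\in\mathbb{R}_+^n$, if every agent reports her true demand and $a$ is the MMF output, then $\ell(d^*,a)=0$; (ii) (fairness) for every agent $i$ who reports her true demand $d_i^*$ and for any demands reported by the other agents, the MMF output $a$ satisfies $u_i(a_i)\ge u_i(e_i)$; (iii) (strategy-proofness) for every agent $i$ and every fixed vector of demands reported by the other agents, if $a^\star$ is the MMF output when $i$ reports $d_i^*$ and $a$ is the MMF output when $i$ reports any other $d_i\ge 0$, then $u_i(a^\star_i)\ge u_i(a_i)$.
   Context: A divisible resource of total size $1$ is shared by $n$ agents; agent $i$ has entitlement $e_i>0$ with $\sum_i e_i=1$. Agent $i$ has a true demand $d_i^*\ge 0$ and a utility $u_i:\mathbb{R}_+\to\mathbb{R}_+$ that is strictly increasing on $[0,d_i^*]$ and satisfies $u_i(x)=u_i(d_i^* )$ for all $x\ge d_i^*$. MMF: given entitlements $e$ and reported demands $d_1,\dots,d_n\ge 0$, set $r=1$, $E=1$, $S=\{1,\dots,n\}$, $a=0\in\mathbb{R}^n$. Process the agents $j$ in ascending order of $d_j/e_j$. For the current $j$: if $d_j<r e_j/E$, set $a_j=d_j$, remove $j$ from $S$, update $r\leftarrow r-d_j$, $E\leftarrow E-e_j$, and continue with the next agent; otherwise set $a_k=r e_k/E$ for all $k\in S$ and stop. Output $a$. For $d,a\in\mathbb{R}_+^n$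 let $\ell_{ur}(a)=1-\sum_i a_i$, $\ell_{or}(d,a)=\sum_i (a_i-d_i)^+$, $\ell_{ud}(d,a)=\sum_i(d_i-a_i)^+$ (with $y^+=\max(y,0)$), and $\ell(d,a)=\min\big(\ell_{ur}(a)+\ell_{or}(d,a),\,\ell_{ud}(d,a)\big)$. *)

theory Defs
  imports Main Complex_Main
begin

text \<open>Agents are indexed by 0,...,n-1; vectors are functions nat => real,
  of which only the values below n matter.\<close>

text \<open>The list holds the agents not yet processed
  (the set S), in ascending order of d_j/e_j; r and E are the remaining
  resource and remaining entitlement; a is the current allocation.\<close>
fun mmf_loop :: "(nat \<Rightarrow> real) \<Rightarrow> (nat \<Rightarrow> real) \<Rightarrow> real \<Rightarrow> real \<Rightarrow> nat list
                   \<Rightarrow> (nat \<Rightarrow> real) \<Rightarrow> (nat \<Rightarrow> real)" where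
  "mmf_loop e d r E [] a = a"
| "mmf_loop e d r E (j # js) a =
     (if d j < r * e j / E
      then mmf_loop e d (r - d j) (E - e j) js (a(j := d j))
      else (\<lambda>k. if k \<in> set (j # js) then r * e k / E else a k))"

text \<open>The MMF mechanism: agents processed in ascending order of d_j/e_j
  (ties broken by index; the output does not depend on the tie-break).\<close>
definition mmf :: "nat \<Rightarrow> (nat \<Rightarrow> real) \<Rightarrow> (nat \<Rightarrow> real) \<Rightarrow> (nat \<Rightarrow> real)" where
  "mmf n e d = mmf_loop e d 1 1 (sort_key (\<lambda>j. d j / e j) [0..<n]) (\<lambda>_. 0)"

definition loss_ur :: "nat \<Rightarrow> (nat \<Rightarrow> real) \<Rightarrow> real" where
  "loss_ur n a = 1 - (\<Sum>i<n. a i)"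

definition loss_or :: "nat \<Rightarrow> (nat \<Rightarrow> real) \<Rightarrow> (nat \<Rightarrow> real) \<Rightarrow> real" where
  "loss_or n d a = (\<Sum>i<n. max (a i - d i) 0)"

definition loss_ud :: "nat \<Rightarrow> (nat \<Rightarrow> real) \<Rightarrow> (nat \<Rightarrow> real) \<Rightarrow> real" where
  "loss_ud n d a = (\<Sum>i<n. max (d i - a i) 0)"

definition loss :: "nat \<Rightarrow> (nat \<Rightarrow> real) \<Rightarrow> (nat \<Rightarrow> real) \<Rightarrow> real" where
  "loss n d a = min (loss_ur n a + loss_or n d a) (loss_ud n d a)"

end

theory Submission
  imports Defs
begin

lemma ar1:
  fixes ej E r dj :: real
  assumes "0 < ej" "ej \<le> E" "E \<le> r" "dj < r*ej/E"
  shows "E - ej \<le> r - dj \<and> 0 < r - dj"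
proof -
  have E: "E > 0" using assms by linarith
  have "dj * E < r * ej" using assms(4) E by (simp add: field_simps)
  have "r * ej \<le> r * E" using assms by (intro mult_left_mono) auto
  have "(E - ej) * E \<le> (r - dj) * E"
  proof -
    have "(E - ej) * E \<le> (E - ej) * r" using assms by (intro mult_left_mono) auto
    also have "\<dots> \<le> (r - dj) * E" using \<open>dj * E < r * ej\<close> by (simp add: algebra_simps)
    finally show ?thesis .
  qed
  hence "E - ej \<le> r - dj" using E by simp
  moreover have "(r - dj) * E > 0" using \<open>dj * E < r * ej\<close> \<open>r * ej \<le> r * E\<close> by (simp add: algebra_simps)
  hence "r - dj > 0" using E by (simp add: zero_less_mult_iff)
  ultimately show ?thesis by simp
qed

lemma ar2:
  fixes ej E r dj dk ek :: real
  assumes "0 < ej" "ej \<le> E" "dj < r*ej/E" "dk*E \<le> r*ek" "0 \<le> ek"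
  shows "dk*(E-ej) \<le> (r-dj)*ek"
proof -
  have E: "E > 0" using assms by linarith
  have h: "dj * E < r * ej" using assms(3) E by (simp add: field_simps)
  have "dk*(E-ej)*E = (dk*E)*(E-ej)" by (simp add: algebra_simps)
  also have "\<dots> \<le> (r*ek)*(E-ej)" using assms by (intro mult_right_mono) auto
  also have "\<dots> = ek * (r*(E-ej))" by (simp add: algebra_simps)
  also have "\<dots> \<le> ek * ((r-dj)*E)" using h assms(5) by (intro mult_left_mono) (auto simp: algebra_simps)
  finally have "dk*(E-ej)*E \<le> (r-dj)*ek*E" by (simp add: algebra_simps)
  thus ?thesis using E by simp
qed

lemma ar3:
  fixes ej E r dj :: real
  assumes "0 < E" "dj < r*ej/E"
  shows "dj*(E-ej) \<le> (r-dj)*ej"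
proof -
  have h: "dj * E < r * ej" using assms by (simp add: field_simps)
  thus ?thesis by (simp add: algebra_simps)
qed

lemma loop_char:
  assumes "distinct js" "set js \<subseteq> {..<n}"
    "sorted_wrt (\<lambda>x y. d x / e x \<le> d y / e y) js"
    "\<forall>k<n. e k > 0" "\<forall>k<n. d k \<ge> 0"
    "E = (\<Sum>k\<in>set js. e k)" "r > 0" "r \<ge> E"
    "\<forall>k<n. k \<notin> set js \<longrightarrow> a k = d k \<and> d k * E \<le> r * e k"
    "(\<Sum>k\<in>{..<n} - set js. a k) + r = 1"
  shows "((\<forall>k<n. mmf_loop e d r E js a k = d k) \<and> (\<Sum>k<n. d k) < 1)
      \<or> (\<exists>lv\<ge>1. (\<forall>k<n. mmf_loop e d r E js a k = min (d k) (lv * e k))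
               \<and> (\<Sum>k<n. mmf_loop e d r E js a k) = 1)"
  using assms
proof (induction js arbitrary: r E a)
  case Nil
  have "(\<Sum>k<n. d k) = (\<Sum>k<n. a k)" using Nil.prems(9) by (intro sum.cong) auto
  hence "(\<Sum>k<n. d k) < 1" using Nil.prems(10) Nil.prems(7) by simp
  thus ?case using Nil.prems(9) by simp
next
  case (Cons j js)
  have jn: "j < n" using Cons.prems(2) by simp
  have ej: "e j > 0" using jn Cons.prems(4) by simp
  have Ej: "E = e j + (\<Sum>k\<in>set js. e k)" using Cons.prems(1,6) by (simp add: sum.insert)
  have sjs: "(\<Sum>k\<in>set js. e k) \<ge> 0" using Cons.prems(2,4) by (intro sum_nonneg) auto
  have ejE: "e j \<le> E" using Ej sjs by simp
  have Epos: "E > 0" using ej ejE by simp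
  show ?case
  proof (cases "d j < r * e j / E")
    case True
    define r' where "r' = r - d j"
    define E' where "E' = E - e j"
    define a' where "a' = a(j := d j)"
    have eq: "mmf_loop e d r E (j # js) a = mmf_loop e d r' E' js a'"
      using True by (simp add: r'_def E'_def a'_def)
    have A1: "E' \<le> r' \<and> 0 < r'" using ar1[OF ej ejE Cons.prems(8) True] r'_def E'_def by simp
    have A2: "\<forall>k<n. k \<notin> set js \<longrightarrow> a' k = d k \<and> d k * E' \<le> r' * e k"
    proof (intro allI impI)
      fix k assume k: "k < n" "k \<notin> set js"
      show "a' k = d k \<and> d k * E' \<le> r' * e k"
      proof (cases "k = j")
        case True
        thus ?thesis using ar3[OF Epos \<open>d j < r * e j / E\<close>] a'_def r'_def E'_def by simp
      next
        case False
        hence "k \<notin> set (j # js)" using k by simp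
        hence "a k = d k \<and> d k * E \<le> r * e k" using Cons.prems(9) k by blast
        moreover have "0 \<le> e k" using Cons.prems(4) k by (simp add: less_imp_le)
        ultimately show ?thesis using ar2[OF ej ejE True] False a'_def r'_def E'_def by simp
      qed
    qed
    have A3: "(\<Sum>k\<in>{..<n} - set js. a' k) + r' = 1"
    proof -
      have s: "{..<n} - set js = insert j ({..<n} - set (j # js))" using jn Cons.prems(1) by auto
      have "(\<Sum>k\<in>{..<n} - set js. a' k) = a' j + (\<Sum>k\<in>{..<n} - set (j # js). a' k)"
        unfolding s by (subst sum.insert) auto
      also have "(\<Sum>k\<in>{..<n} - set (j # js). a' k) = (\<Sum>k\<in>{..<n} - set (j # js). a k)"
        by (intro sum.cong) (auto simp: a'_def)
      finally show ?thesis using Cons.prems(10) a'_def r'_def by simp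
    qed
    have A4: "E' = (\<Sum>k\<in>set js. e k)" using Ej E'_def by simp
    have "sorted_wrt (\<lambda>x y. d x / e x \<le> d y / e y) js" using Cons.prems(3) by simp
    from Cons.IH[OF _ _ this Cons.prems(4,5) A4 _ _ A2 A3] Cons.prems(1,2) A1
    show ?thesis unfolding eq by simp
  next
    case False
    define lam where "lam = r / E"
    have out: "\<And>k. mmf_loop e d r E (j # js) a k = (if k \<in> set (j # js) then lam * e k else a k)"
      using False by (simp add: lam_def)
    have lam1: "lam \<ge> 1" using Cons.prems(8) Epos by (simp add: lam_def)
    have ldj: "lam * e j \<le> d j" using False by (simp add: lam_def)
    have ldj': "lam \<le> d j / e j" using ldj ej by (simp add: field_simps)
    have P: "\<forall>k<n. mmf_loop e d r E (j # js) a k = min (d k) (lam * e k)"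
    proof (intro allI impI)
      fix k assume k: "k < n"
      show "mmf_loop e d r E (j # js) a k = min (d k) (lam * e k)"
      proof (cases "k \<in> set (j # js)")
        case True
        have "lam * e k \<le> d k"
        proof (cases "k = j")
          case True thus ?thesis using ldj by simp
        next
          case False
          hence "k \<in> set js" using \<open>k \<in> set (j # js)\<close> by simp
          hence "d j / e j \<le> d k / e k" using Cons.prems(3) by simp
          hence "lam \<le> d k / e k" using ldj' by simp
          thus ?thesis using Cons.prems(4) k by (simp add: field_simps)
        qed
        thus ?thesis using out True by simp
      next
        case False
        hence "a k = d k \<and> d k * E \<le> r * e k" using Cons.prems(9) k by blast
        moreover have "d k \<le> lam * e k" using calculation Epos
          by (simp add: lam_def field_simps)
        ultimately show ?thesis using out False by simp
      qed
    qed
    have S: "(\<Sum>k<n. mmf_loop e d r E (j # js) a k) = 1"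
    proof -
      have sub: "set (j # js) \<subseteq> {..<n}" using Cons.prems(2) .
      have "(\<Sum>k<n. mmf_loop e d r E (j # js) a k)
          = (\<Sum>k\<in>{..<n} - set (j # js). mmf_loop e d r E (j # js) a k)
            + (\<Sum>k\<in>set (j # js). mmf_loop e d r E (j # js) a k)"
        using sum.subset_diff[OF sub, of "mmf_loop e d r E (j # js) a"] by simp
      also have "(\<Sum>k\<in>{..<n} - set (j # js). mmf_loop e d r E (j # js) a k)
          = (\<Sum>k\<in>{..<n} - set (j # js). a k)" by (intro sum.cong) (auto simp: out simp del: mmf_loop.simps)
      also have "(\<Sum>k\<in>set (j # js). mmf_loop e d r E (j # js) a k)
          = (\<Sum>k\<in>set (j # js). lam * e k)" by (intro sum.cong) (auto simp: out simp del: mmf_loop.simps)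
      also have "\<dots> = lam * E" using Cons.prems(6) by (simp add: sum_distrib_left)
      also have "lam * E = r" using Epos by (simp add: lam_def)
      finally show ?thesis using Cons.prems(10) by simp
    qed
    show ?thesis using P S lam1 by blast
  qed
qed

lemma mmf_char:
  assumes "\<forall>k<n. e k > 0" "(\<Sum>k<n. e k) = 1" "\<forall>k<n. d k \<ge> 0"
  shows "((\<forall>k<n. mmf n e d k = d k) \<and> (\<Sum>k<n. d k) < 1)
      \<or> (\<exists>lv\<ge>1. (\<forall>k<n. mmf n e d k = min (d k) (lv * e k))
               \<and> (\<Sum>k<n. mmf n e d k) = 1)"
proof -
  let ?js = "sort_key (\<lambda>j. d j / e j) [0..<n]"
  have st: "set ?js = {..<n}" by auto
  have "sorted (map (\<lambda>j. d j / e j) ?js)" by simp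
  hence s: "sorted_wrt (\<lambda>x y. d x / e x \<le> d y / e y) ?js" by (simp add: sorted_map)
  have "distinct ?js" by (simp add: distinct_sort)
  from loop_char[OF this _ s assms(1,3), of 1 1 "\<lambda>_. 0"] st assms(2)
  show ?thesis unfolding mmf_def by simp
qed

lemma u_min:
  fixes f :: "real \<Rightarrow> real"
  assumes "\<forall>x\<ge>D. f x = f D"
  shows "f (min x D) = f x"
proof (cases "x \<le> D")
  case True thus ?thesis by (simp add: min_def)
next
  case False
  hence "f x = f D" using assms by (meson linear)
  thus ?thesis using False by (simp add: min_def)
qed

lemma u_mono:
  fixes f :: "real \<Rightarrow> real"
  assumes "strict_mono_on {0..D} f" "\<forall>x\<ge>D. f x = f D" "0 \<le> y" "y \<le> x"
  shows "f y \<le> f x"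
proof -
  have mono: "f a \<le> f b" if "0 \<le> a" "a \<le> b" "b \<le> D" for a b
  proof (cases "a = b")
    case False
    hence "a < b" using that by simp
    moreover have "a \<in> {0..D}" "b \<in> {0..D}" using that by auto
    ultimately have "f a < f b" using assms(1) unfolding strict_mono_on_def by blast
    thus ?thesis by simp
  qed simp
  show ?thesis
  proof (cases "x \<le> D")
    case True thus ?thesis using mono assms(3,4) by blast
  next
    case False
    hence fx: "f x = f D" using assms(2) by (meson linear)
    show ?thesis
    proof (cases "y \<le> D")
      case True thus ?thesis using mono[of y D] fx assms(3) by simp
    next
      case False
      hence "f y = f D" using assms(2) by (meson linear)
      thus ?thesis using fx by simp
    qed
  qed
qed

lemma min_aux:
  fixes a b D :: real
  shows "\<not> D \<le> a \<Longrightarrow> a = min D b \<Longrightarrow> a = b"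
  by (auto simp: min_def split: if_splits)

lemma sp_core:
  assumes e: "\<forall>k<n. e k > 0" "(\<Sum>k<n. e k) = 1"
    and d: "\<forall>k<n. d k \<ge> 0" and i: "i < n" and D: "D \<ge> 0" and x: "x \<ge> 0"
  shows "mmf n e (d(i := x)) i \<le> mmf n e (d(i := D)) i \<or> mmf n e (d(i := D)) i \<ge> D"
proof -
  let ?d1 = "d(i := D)" and ?d2 = "d(i := x)"
  let ?a1 = "mmf n e ?d1" and ?a2 = "mmf n e ?d2"
  have d1: "\<forall>k<n. ?d1 k \<ge> 0" using d D by simp
  have d2: "\<forall>k<n. ?d2 k \<ge> 0" using d x by simp
  have split: "(\<Sum>k<n. f k) = f i + (\<Sum>k\<in>{..<n} - {i}. f k)" for f :: "nat \<Rightarrow> real"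
    using i by (intro sum.remove) auto
  show ?thesis
  proof (cases "?a1 i \<ge> D")
    case True thus ?thesis by simp
  next
    case nD: False
    from mmf_char[OF e d1] show ?thesis
    proof
      assume "(\<forall>k<n. ?a1 k = ?d1 k) \<and> (\<Sum>k<n. ?d1 k) < 1"
      hence "?a1 i = D" using i by simp
      thus ?thesis using nD by simp
    next
      assume "\<exists>lv\<ge>1. (\<forall>k<n. ?a1 k = min (?d1 k) (lv * e k)) \<and> (\<Sum>k<n. ?a1 k) = 1"
      then obtain l1 where l1: "l1 \<ge> 1" "\<forall>k<n. ?a1 k = min (?d1 k) (l1 * e k)" "(\<Sum>k<n. ?a1 k) = 1"
        by blast
      have m: "?a1 i = min D (l1 * e i)" using l1(2) i by simp
      have a1i: "?a1 i = l1 * e i" using min_aux[OF nD m] .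
      from mmf_char[OF e d2] show ?thesis
      proof
        assume A: "(\<forall>k<n. ?a2 k = ?d2 k) \<and> (\<Sum>k<n. ?d2 k) < 1"
        show ?thesis
        proof (rule ccontr)
          assume "\<not> ?thesis"
          hence xb: "x > l1 * e i" using A i a1i by simp
          have "(\<Sum>k<n. ?a1 k) \<le> (\<Sum>k<n. ?d2 k)"
          proof (rule sum_mono)
            fix k assume "k \<in> {..<n}"
            thus "?a1 k \<le> ?d2 k" using l1(2) xb by (cases "k = i") auto
          qed
          thus False using A l1(3) by simp
        qed
      next
        assume "\<exists>lv\<ge>1. (\<forall>k<n. ?a2 k = min (?d2 k) (lv * e k)) \<and> (\<Sum>k<n. ?a2 k) = 1"
        then obtain l2 where l2: "l2 \<ge> 1" "\<forall>k<n. ?a2 k = min (?d2 k) (l2 * e k)" "(\<Sum>k<n. ?a2 k) = 1"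
          by blast
        show ?thesis
        proof (cases "l2 \<le> l1")
          case True
          have "?a2 i \<le> l2 * e i" using l2(2) i by simp
          also have "\<dots> \<le> l1 * e i" using True e(1) i by (intro mult_right_mono) auto
          finally show ?thesis using a1i by simp
        next
          case False
          have "(\<Sum>k\<in>{..<n} - {i}. ?a1 k) \<le> (\<Sum>k\<in>{..<n} - {i}. ?a2 k)"
          proof (rule sum_mono)
            fix k assume k: "k \<in> {..<n} - {i}"
            have "l1 * e k \<le> l2 * e k" using False e(1) k by (intro mult_right_mono) auto
            thus "?a1 k \<le> ?a2 k" using l1(2) l2(2) k by auto
          qed
          thus ?thesis using split[of ?a1] split[of ?a2] l1(3) l2(3) by simp
        qed
      qed
    qed
  qed
qed

theorem theorem1:
  fixes n :: nat
    and e dstar :: "nat \<Rightarrow> real"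
    and u :: "nat \<Rightarrow> real \<Rightarrow> real"
  assumes "n \<ge> 1"
    and e_pos: "\<forall>i<n. e i > 0"
    and e_sum: "(\<Sum>i<n. e i) = 1"
    and dstar_nonneg: "\<forall>i<n. dstar i \<ge> 0"
    and u_nonneg: "\<forall>i<n. \<forall>x\<ge>0. u i x \<ge> 0"
    and u_incr: "\<forall>i<n. strict_mono_on {0..dstar i} (u i)"
    and u_sat: "\<forall>i<n. \<forall>x\<ge>dstar i. u i x = u i (dstar i)"
  shows "loss n dstar (mmf n e dstar) = 0
       \<and> (\<forall>i<n. \<forall>d. (\<forall>j<n. d j \<ge> 0) \<longrightarrow> d i = dstar i
              \<longrightarrow> u i (mmf n e d i) \<ge> u i (e i))
       \<and> (\<forall>i<n. \<forall>d di. (\<forall>j<n. d j \<ge> 0) \<longrightarrow> di \<ge> 0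
              \<longrightarrow> u i (mmf n e (d(i := dstar i)) i) \<ge> u i (mmf n e (d(i := di)) i))"
proof (intro conjI allI impI)
  let ?a = "mmf n e dstar"
  show "loss n dstar ?a = 0"
    using mmf_char[OF e_pos e_sum dstar_nonneg]
  proof
    assume A: "(\<forall>k<n. ?a k = dstar k) \<and> (\<Sum>k<n. dstar k) < 1"
    have "loss_ud n dstar ?a = 0" unfolding loss_ud_def using A by simp
    moreover have "loss_or n dstar ?a = 0" unfolding loss_or_def using A by simp
    moreover have "loss_ur n ?a > 0" unfolding loss_ur_def using A by simp
    ultimately show ?thesis unfolding loss_def by simp
  next
    assume "\<exists>lv\<ge>1. (\<forall>k<n. ?a k = min (dstar k) (lv * e k)) \<and> (\<Sum>k<n. ?a k) = 1"
    then obtain l where l: "\<forall>k<n. ?a k = min (dstar k) (l * e k)" "(\<Sum>k<n. ?a k) = 1" by blast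
    have "loss_ud n dstar ?a \<ge> 0" unfolding loss_ud_def by (intro sum_nonneg) auto
    moreover have "loss_or n dstar ?a = 0" unfolding loss_or_def using l(1) by simp
    moreover have "loss_ur n ?a = 0" unfolding loss_ur_def using l(2) by simp
    ultimately show ?thesis unfolding loss_def by simp
  qed
next
  fix i :: nat and d :: "nat \<Rightarrow> real" assume i: "i < n" and d: "\<forall>j<n. d j \<ge> 0" and di: "d i = dstar i"
  have ge: "mmf n e d i \<ge> min (e i) (dstar i)"
    using mmf_char[OF e_pos e_sum d]
  proof
    assume "(\<forall>k<n. mmf n e d k = d k) \<and> (\<Sum>k<n. d k) < 1"
    thus ?thesis using i di by simp
  next
    assume "\<exists>lv\<ge>1. (\<forall>k<n. mmf n e d k = min (d k) (lv * e k)) \<and> (\<Sum>k<n. mmf n e d k) = 1"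
    then obtain l where l: "l \<ge> 1" "\<forall>k<n. mmf n e d k = min (d k) (l * e k)" by blast
    have "e i \<le> l * e i" using l(1) e_pos i by simp
    thus ?thesis using l(2) i di by auto
  qed
  have us: "\<forall>x\<ge>dstar i. u i x = u i (dstar i)" using u_sat i by blast
  have ui: "strict_mono_on {0..dstar i} (u i)" using u_incr i by blast
  have "u i (e i) = u i (min (e i) (dstar i))" using u_min[OF us, of "e i"] by simp
  also have "\<dots> \<le> u i (mmf n e d i)"
    using u_mono[OF ui us, of "min (e i) (dstar i)" "mmf n e d i"] ge e_pos dstar_nonneg i
    by (simp add: less_imp_le)
  finally show "u i (e i) \<le> u i (mmf n e d i)" .
next
  fix i :: nat and d :: "nat \<Rightarrow> real" and di :: real assume i: "i < n" and d: "\<forall>j<n. d j \<ge> 0" and di: "di \<ge> 0"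
  let ?a1 = "mmf n e (d(i := dstar i)) i" and ?a2 = "mmf n e (d(i := di)) i"
  have D: "dstar i \<ge> 0" using dstar_nonneg i by simp
  have a2: "?a2 \<ge> 0"
    using mmf_char[OF e_pos e_sum, of "d(i := di)"]
  proof
    assume "(\<forall>k<n. mmf n e (d(i := di)) k = (d(i := di)) k) \<and> (\<Sum>k<n. (d(i := di)) k) < 1"
    thus ?thesis using i di by simp
  next
    assume "\<exists>lv\<ge>1. (\<forall>k<n. mmf n e (d(i := di)) k = min ((d(i := di)) k) (lv * e k)) \<and> (\<Sum>k<n. mmf n e (d(i := di)) k) = 1"
    then obtain l where l: "l \<ge> 1" "\<forall>k<n. mmf n e (d(i := di)) k = min ((d(i := di)) k) (l * e k)" by blast
    have "0 \<le> l * e i" using l(1) e_pos i by (simp add: less_imp_le)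
    thus ?thesis using l(2) i di by simp
  next
    show "\<forall>k<n. 0 \<le> (d(i := di)) k" using d di by simp
  qed
  have us: "\<forall>x\<ge>dstar i. u i x = u i (dstar i)" using u_sat i by blast
  have ui: "strict_mono_on {0..dstar i} (u i)" using u_incr i by blast
  have um: "\<And>y x. 0 \<le> y \<Longrightarrow> y \<le> x \<Longrightarrow> u i y \<le> u i x"
    using u_mono[OF ui us] by blast
  from sp_core[OF e_pos e_sum d i D di] show "u i ?a2 \<le> u i ?a1"
  proof
    assume "?a2 \<le> ?a1" thus ?thesis using um a2 by simp
  next
    assume h: "?a1 \<ge> dstar i"
    have "u i ?a2 = u i (min ?a2 (dstar i))" using u_min[OF us, of ?a2] by simp
    also have "\<dots> \<le> u i (dstar i)" using um[of "min ?a2 (dstar i)" "dstar i"] a2 D by simp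
    also have "\<dots> = u i ?a1" using us h by metis
    finally show ?thesis .
  qed
qed

end
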